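(* Assume properties (P.4), (P.5) and (P.6) hold. Let $N\in\mathbb N$ and let $\Omega\in\mathscr A$ be an $N$-admissible set with $\mathfrak m(\Omega)\in(0,+\infty)$. Then $\Omega$ has an $N$-Cheeger set, i.e. $\mathscr C_N(\Omega)\neq\emptyset$.
   Context: $(X,\mathscr A,\mathfrak m)$ is a non-negative $\sigma$-finite measure space. For $A,B\in\mathscr A$, "$A\subset B$" means $\mathfrak m(A\setminus B)=0$. $P\colon\mathscr A\to[0,+\infty]$ is a proper functional (i.e. $P(A)<+\infty$ for some $A\in\mathscr A$), called the perimeter. Convergence of sets in $L^1(X,\mathfrak m)$ means $L^1$ convergence of their characteristic functions. Properties: (P.4) $P$ is lower semicontinuous with respect to $L^1(X,\mathfrak m)$ convergence: if $\chi_{E_k}\to\chi_E$ in $L^1(X,\mathfrak m)$ then $P(E)\le\liminf_k P(E_k)$. (P.5) For every $c\ge0$, the set $\{\chi_E: E\in\mathscr A,\ P(E)\le c\}$ is compact in $L^1(X,\mathfrak m)$. (P.6) There is a function $f\colon(0,+\infty)\to(0,+\infty)$ with $\lim_{\varepsilon\to0^+}f(\varepsilon)=+\infty$ such that, whenever $\varepsilon>0$ and $E\in\mathscr A$ with $\mathfrak m(E)\le\varepsilon$, one has $P(E)\ge f(\varepsilon)\,\mathfrak m(E)$. Clusters: for $N\in\mathbb N$, an $N$-cluster is a family $\mathcal E=\{\mathcal E(i)\}_{i=1}^N\subset\mathscr A$ with $0<\mathfrak m(\mathcal E(i))<+\infty$ and $P(\mathcal E(i))<+\infty$ for all $i$,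 and $\mathfrak m(\mathcal E(i)\cap\mathcal E(j))=0$ for $i\neq j$. A set $\Omega\in\mathscr A$ is $N$-admissible if there is an $N$-cluster all of whose chambers are contained in $\Omega$. For $N$-admissible $\Omega$, the $N$-Cheeger constant is $h_N(\Omega)=\inf\{\sum_{i=1}^N P(\mathcal E(i))/\mathfrak m(\mathcal E(i)) : \mathcal E \text{ an } N\text{-cluster with all chambers contained in }\Omega\}$; an $N$-cluster in $\Omega$ attaining this infimum is an $N$-Cheeger set of $\Omega$, and $\mathscr C_N(\Omega)$ denotes the collection of all of them. *)

theory Defs
  imports "HOL-Analysis.Analysis"
begin

definition ae_subset :: "'a measure \<Rightarrow> 'a set \<Rightarrow> 'a set \<Rightarrow> bool" where
  "ae_subset M A B \<longleftrightarrow> emeasure M (A - B) = 0"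

text \<open>L1 convergence of characteristic functions: the L1 distance of chi_E and chi_F
  is m(E symmetric-difference F).\<close>
definition L1_conv_sets :: "'a measure \<Rightarrow> (nat \<Rightarrow> 'a set) \<Rightarrow> 'a set \<Rightarrow> bool" where
  "L1_conv_sets M Es E \<longleftrightarrow>
     (\<forall>k. Es k \<in> sets M) \<and> E \<in> sets M \<and>
     ((\<lambda>k. emeasure M ((Es k - E) \<union> (E - Es k))) \<longlonglongrightarrow> 0)"

definition perimeter_lsc :: "'a measure \<Rightarrow> ('a set \<Rightarrow> ennreal) \<Rightarrow> bool" where
  "perimeter_lsc M P \<longleftrightarrow>
     (\<forall>Es E. L1_conv_sets M Es E \<longrightarrow> P E \<le> liminf (\<lambda>k. P (Es k)))"

definition perimeter_compact :: "'a measure \<Rightarrow> ('a set \<Rightarrow> ennreal) \<Rightarrow> bool" where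
  "perimeter_compact M P \<longleftrightarrow>
     (\<forall>c::real. c \<ge> 0 \<longrightarrow>
        (\<forall>Es. (\<forall>k. Es k \<in> sets M \<and> P (Es k) \<le> ennreal c) \<longrightarrow>
           (\<exists>(r::nat \<Rightarrow> nat) E. strict_mono r \<and> E \<in> sets M \<and> P E \<le> ennreal c \<and>
                  L1_conv_sets M (Es \<circ> r) E)))"

definition perimeter_small_sets :: "'a measure \<Rightarrow> ('a set \<Rightarrow> ennreal) \<Rightarrow> bool" where
  "perimeter_small_sets M P \<longleftrightarrow>
     (\<exists>f::real \<Rightarrow> real. (\<forall>\<epsilon>>0. f \<epsilon> > 0) \<and> filterlim f at_top (at_right 0) \<and>
        (\<forall>\<epsilon>>0. \<forall>E\<in>sets M. emeasure M E \<le> ennreal \<epsilon> \<longrightarrow>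
              P E \<ge> ennreal (f \<epsilon>) * emeasure M E))"

definition is_cluster :: "'a measure \<Rightarrow> ('a set \<Rightarrow> ennreal) \<Rightarrow> nat \<Rightarrow> (nat \<Rightarrow> 'a set) \<Rightarrow> bool" where
  "is_cluster M P N E \<longleftrightarrow>
     (\<forall>i\<in>{1..N}. E i \<in> sets M \<and> 0 < emeasure M (E i) \<and> emeasure M (E i) < \<infinity>
                  \<and> P (E i) < \<infinity>) \<and>
     (\<forall>i\<in>{1..N}. \<forall>j\<in>{1..N}. i \<noteq> j \<longrightarrow> emeasure M (E i \<inter> E j) = 0)"

definition cluster_in :: "'a measure \<Rightarrow> ('a set \<Rightarrow> ennreal) \<Rightarrow> nat \<Rightarrow> 'a set \<Rightarrow> (nat \<Rightarrow> 'a set) \<Rightarrow> bool" where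
  "cluster_in M P N \<Omega> E \<longleftrightarrow> is_cluster M P N E \<and> (\<forall>i\<in>{1..N}. ae_subset M (E i) \<Omega>)"

definition admissible :: "'a measure \<Rightarrow> ('a set \<Rightarrow> ennreal) \<Rightarrow> nat \<Rightarrow> 'a set \<Rightarrow> bool" where
  "admissible M P N \<Omega> \<longleftrightarrow> (\<exists>E. cluster_in M P N \<Omega> E)"

text \<open>Sum of P(E i)/m(E i); all quantities are finite reals for a cluster.\<close>
definition cheeger_ratio :: "'a measure \<Rightarrow> ('a set \<Rightarrow> ennreal) \<Rightarrow> nat \<Rightarrow> (nat \<Rightarrow> 'a set) \<Rightarrow> real" where
  "cheeger_ratio M P N E = (\<Sum>i=1..N. enn2real (P (E i)) / measure M (E i))"

definition cheeger_const :: "'a measure \<Rightarrow> ('a set \<Rightarrow> ennreal) \<Rightarrow> nat \<Rightarrow> 'a set \<Rightarrow> real" where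
  "cheeger_const M P N \<Omega> = Inf {cheeger_ratio M P N E | E. cluster_in M P N \<Omega> E}"

definition cheeger_sets :: "'a measure \<Rightarrow> ('a set \<Rightarrow> ennreal) \<Rightarrow> nat \<Rightarrow> 'a set \<Rightarrow> (nat \<Rightarrow> 'a set) set" where
  "cheeger_sets M P N \<Omega> =
     {E. cluster_in M P N \<Omega> E \<and> cheeger_ratio M P N E = cheeger_const M P N \<Omega>}"

end

theory Submission imports Defs begin

lemma L1_subseq:
  assumes "L1_conv_sets M Es E" "strict_mono r"
  shows "L1_conv_sets M (Es \<circ> r) E"
  using assms LIMSEQ_subseq_LIMSEQ[of "\<lambda>k. emeasure M ((Es k - E) \<union> (E - Es k))" 0 r]
  unfolding L1_conv_sets_def by (auto simp: o_def)

lemma L1_sym: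
  assumes "L1_conv_sets M Es E"
  shows "(\<lambda>k. emeasure M (Es k - E)) \<longlonglongrightarrow> 0" "(\<lambda>k. emeasure M (E - Es k)) \<longlonglongrightarrow> 0"
proof -
  have s: "Es k \<in> sets M" "E \<in> sets M" for k using assms unfolding L1_conv_sets_def by auto
  have t: "(\<lambda>k. emeasure M ((Es k - E) \<union> (E - Es k))) \<longlonglongrightarrow> 0" using assms unfolding L1_conv_sets_def by auto
  show "(\<lambda>k. emeasure M (Es k - E)) \<longlonglongrightarrow> 0"
    by (rule tendsto_sandwich[OF _ _ tendsto_const t]) (auto intro!: always_eventually emeasure_mono sets.Un sets.Diff simp: s)
  show "(\<lambda>k. emeasure M (E - Es k)) \<longlonglongrightarrow> 0"
    by (rule tendsto_sandwich[OF _ _ tendsto_const t]) (auto intro!: always_eventually emeasure_mono sets.Un sets.Diff simp: s)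
qed

lemma zero_by_limit:
  fixes a :: ennreal
  assumes "\<And>k. a \<le> d k" "d \<longlonglongrightarrow> 0"
  shows "a = 0"
proof -
  have "a \<le> 0" using assms by (intro LIMSEQ_le_const[OF assms(2)]) auto
  thus ?thesis by simp
qed

lemma measure_conv:
  assumes "L1_conv_sets M G E" "emeasure M E < \<infinity>" "\<And>k. emeasure M (G k) < \<infinity>"
  shows "(\<lambda>k. measure M (G k)) \<longlonglongrightarrow> measure M E"
proof -
  have s: "G k \<in> sets M" "E \<in> sets M" for k using assms unfolding L1_conv_sets_def by auto
  have t: "(\<lambda>k. emeasure M ((G k - E) \<union> (E - G k))) \<longlonglongrightarrow> 0" using assms unfolding L1_conv_sets_def by auto
  define d where "d k = measure M ((G k - E) \<union> (E - G k))" for k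
  have fin: "emeasure M ((G k - E) \<union> (E - G k)) < \<infinity>" for k
    by (rule le_less_trans[OF emeasure_subadditive]) (use s assms in \<open>auto intro: le_less_trans[OF emeasure_mono]\<close>)
  have d0: "d \<longlonglongrightarrow> 0" unfolding d_def measure_def
    using tendsto_enn2real[of _ 0] t by (metis ennreal_0 order_refl)
  have "norm (measure M (G k) - measure M E) \<le> d k" for k
  proof -
    have "G k \<subseteq> E \<union> ((G k - E) \<union> (E - G k))" by auto
    hence "emeasure M (G k) \<le> emeasure M E + emeasure M ((G k - E) \<union> (E - G k))"
      using s by (meson emeasure_mono emeasure_subadditive order_trans sets.Un sets.Diff)
    hence 1: "measure M (G k) \<le> measure M E + d k" unfolding d_def measure_def
      using fin assms by (metis enn2real_mono enn2real_plus ennreal_add_eq_top infinity_ennreal_def less_top)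
    have "E \<subseteq> G k \<union> ((G k - E) \<union> (E - G k))" by auto
    hence "emeasure M E \<le> emeasure M (G k) + emeasure M ((G k - E) \<union> (E - G k))"
      using s by (meson emeasure_mono emeasure_subadditive order_trans sets.Un sets.Diff)
    hence 2: "measure M E \<le> measure M (G k) + d k" unfolding d_def measure_def
      using fin assms by (metis enn2real_mono enn2real_plus ennreal_add_eq_top infinity_ennreal_def less_top)
    show ?thesis using 1 2 by simp
  qed
  hence "(\<lambda>k. measure M (G k) - measure M E) \<longlonglongrightarrow> 0"
    by (intro Lim_null_comparison[OF _ d0]) auto
  thus ?thesis by (simp add: LIM_zero_iff)
qed


lemma extract_subseq:
  fixes F :: "nat \<Rightarrow> nat \<Rightarrow> 'a set" and c :: real
  assumes comp: "perimeter_compact M P" and c: "c \<ge> 0"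
    and Fs: "\<And>k i. F k i \<in> sets M" and Fp: "\<And>k i. P (F k i) \<le> ennreal c"
  shows "\<exists>r E p. strict_mono r \<and> (\<forall>i\<in>{1..n}. E i \<in> sets M \<and> P (E i) \<le> ennreal c \<and>
           L1_conv_sets M (\<lambda>k. F (r k) i) (E i) \<and> (\<lambda>k. enn2real (P (F (r k) i))) \<longlonglongrightarrow> p i)"
proof (induction n)
  case 0
  show ?case by (rule exI[of _ id]) (auto simp: strict_mono_def)
next
  case (Suc n)
  then obtain r E p where r: "strict_mono r" and H: "\<forall>i\<in>{1..n}. E i \<in> sets M \<and> P (E i) \<le> ennreal c \<and>
           L1_conv_sets M (\<lambda>k. F (r k) i) (E i) \<and> (\<lambda>k. enn2real (P (F (r k) i))) \<longlonglongrightarrow> p i"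
    by blast
  have "\<exists>(r1::nat \<Rightarrow> nat) E1. strict_mono r1 \<and> E1 \<in> sets M \<and> P E1 \<le> ennreal c \<and>
                  L1_conv_sets M ((\<lambda>k. F (r k) (Suc n)) \<circ> r1) E1"
  proof -
    have "\<forall>Es. (\<forall>k. Es k \<in> sets M \<and> P (Es k) \<le> ennreal c) \<longrightarrow>
           (\<exists>(r::nat \<Rightarrow> nat) E. strict_mono r \<and> E \<in> sets M \<and> P E \<le> ennreal c \<and>
                  L1_conv_sets M (Es \<circ> r) E)" using comp c unfolding perimeter_compact_def by blast
    from spec[OF this, of "\<lambda>k. F (r k) (Suc n)"] show ?thesis using Fs Fp by blast
  qed
  then obtain r1 E1 where r1: "strict_mono r1" "E1 \<in> sets M" "P E1 \<le> ennreal c"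
    "L1_conv_sets M ((\<lambda>k. F (r k) (Suc n)) \<circ> r1) E1" by blast
  define g where "g k = enn2real (P (F (r (r1 k)) (Suc n)))" for k
  have "bounded (range g)"
    unfolding bounded_iff g_def using c Fp by (auto intro!: exI[of _ c] enn2real_leI)
  then obtain l r2 where r2: "strict_mono (r2::nat\<Rightarrow>nat)" "(g \<circ> r2) \<longlonglongrightarrow> l"
    using bounded_imp_convergent_subsequence by blast
  define r' where "r' = r \<circ> r1 \<circ> r2"
  have sm: "strict_mono r'" "strict_mono (r1 \<circ> r2)" unfolding r'_def using r r1 r2 by (auto intro: strict_mono_o)
  show ?case
  proof (intro exI conjI ballI)
    show "strict_mono r'" by fact
    fix i assume i: "i \<in> {1..Suc n}"
    show "(E(Suc n := E1)) i \<in> sets M" "P ((E(Suc n := E1)) i) \<le> ennreal c"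
      using i H r1 by (cases "i = Suc n"; auto)+
    show "L1_conv_sets M (\<lambda>k. F (r' k) i) ((E(Suc n := E1)) i)"
    proof (cases "i = Suc n")
      case True
      show ?thesis using L1_subseq[OF r1(4) r2(1)] True by (simp add: r'_def o_def)
    next
      case False
      hence "L1_conv_sets M (\<lambda>k. F (r k) i) (E i)" using i H by auto
      from L1_subseq[OF this sm(2)] show ?thesis using False by (simp add: r'_def o_def)
    qed
    show "(\<lambda>k. enn2real (P (F (r' k) i))) \<longlonglongrightarrow> (p(Suc n := l)) i"
    proof (cases "i = Suc n")
      case True
      show ?thesis using r2(2) True by (simp add: r'_def o_def g_def)
    next
      case False
      hence "(\<lambda>k. enn2real (P (F (r k) i))) \<longlonglongrightarrow> p i" using i H by auto
      from LIMSEQ_subseq_LIMSEQ[OF this sm(2)] show ?thesis using False by (simp add: r'_def o_def)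
    qed
  qed
qed


lemma small_bound:
  assumes "perimeter_small_sets M P" "C \<ge> 0"
  shows "\<exists>e>0. \<forall>E\<in>sets M. 0 < emeasure M E \<longrightarrow> emeasure M E < \<infinity> \<longrightarrow> P E < \<infinity> \<longrightarrow>
           enn2real (P E) / measure M E \<le> C \<longrightarrow> e < measure M E"
proof -
  obtain f :: "real \<Rightarrow> real" where fpos: "\<forall>\<epsilon>>0. f \<epsilon> > 0" and flim: "filterlim f at_top (at_right 0)"
    and fP: "\<forall>\<epsilon>>0. \<forall>E\<in>sets M. emeasure M E \<le> ennreal \<epsilon> \<longrightarrow> P E \<ge> ennreal (f \<epsilon>) * emeasure M E"
    using assms(1) unfolding perimeter_small_sets_def by blast
  have "eventually (\<lambda>x. C < f x) (at_right 0)" using flim filterlim_at_top_dense by blast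
  then obtain b :: real where b: "b > 0" "\<forall>y>0. y < b \<longrightarrow> C < f y"
    unfolding eventually_at_right_field by blast
  define e where "e = b / 2"
  have e: "e > 0" "C < f e" using b unfolding e_def by auto
  show ?thesis
  proof (intro exI[of _ e] conjI ballI impI)
    show "e > 0" by fact
    fix E assume E: "E \<in> sets M" "0 < emeasure M E" "emeasure M E < \<infinity>" "P E < \<infinity>"
      "enn2real (P E) / measure M E \<le> C"
    have em: "emeasure M E = ennreal (measure M E)" using E by (simp add: emeasure_eq_ennreal_measure)
    have mpos: "measure M E > 0" using E(2) em by simp
    show "e < measure M E"
    proof (rule ccontr)
      assume "\<not> e < measure M E"
      hence "emeasure M E \<le> ennreal e" using em by (simp add: ennreal_leI)
      hence "P E \<ge> ennreal (f e) * emeasure M E" using fP e E by blast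
      moreover have "0 \<le> f e" using fpos e by (simp add: less_imp_le)
      ultimately have "P E \<ge> ennreal (f e * measure M E)" using em by (simp add: ennreal_mult)
      hence "enn2real (ennreal (f e * measure M E)) \<le> enn2real (P E)"
        using E(4) by (intro enn2real_mono) auto
      hence "enn2real (P E) \<ge> f e * measure M E"
        using \<open>0 \<le> f e\<close> by simp
      hence "enn2real (P E) / measure M E \<ge> f e" using mpos by (simp add: pos_le_divide_eq)
      thus False using E(5) e by linarith
    qed
  qed
qed

lemma ae_emeasure_le:
  assumes "ae_subset M A B" "A \<in> sets M" "B \<in> sets M"
  shows "emeasure M A \<le> emeasure M B"
proof -
  have "emeasure M A \<le> emeasure M (B \<union> (A - B))" by (rule emeasure_mono) (use assms in auto)
  also have "\<dots> \<le> emeasure M B + emeasure M (A - B)" using assms by (intro emeasure_subadditive) auto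
  finally show ?thesis using assms unfolding ae_subset_def by simp
qed


theorem theorem3p1:
  fixes M :: "'a measure" and P :: "'a set \<Rightarrow> ennreal" and N :: nat and \<Omega> :: "'a set"
  assumes "sigma_finite_measure M"
    and "\<exists>A\<in>sets M. P A < \<infinity>"
    and "perimeter_lsc M P"
    and "perimeter_compact M P"
    and "perimeter_small_sets M P"
    and "N \<ge> 1"
    and "\<Omega> \<in> sets M"
    and "0 < emeasure M \<Omega>" and "emeasure M \<Omega> < \<infinity>"
    and "admissible M P N \<Omega>"
  shows "cheeger_sets M P N \<Omega> \<noteq> {}"
proof -
  note lsc = assms(3) and comp = assms(4) and small = assms(5) and N1 = assms(6)
    and \<Omega>s = assms(7) and \<Omega>fin = assms(9)
  define S where "S = {cheeger_ratio M P N E | E. cluster_in M P N \<Omega> E}"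
  define h where "h = cheeger_const M P N \<Omega>"
  have hS: "h = Inf S" unfolding h_def S_def cheeger_const_def by simp
  have ratio_nn: "cheeger_ratio M P N E \<ge> 0" for E
    unfolding cheeger_ratio_def by (intro sum_nonneg divide_nonneg_nonneg) auto
  have Sne: "S \<noteq> {}" using assms(10) unfolding S_def admissible_def by blast
  have Sbdd: "bdd_below S" unfolding S_def using ratio_nn by (intro bdd_belowI[of _ 0]) auto
  have h0: "h \<ge> 0" unfolding hS using Sne ratio_nn by (intro cInf_greatest) (auto simp: S_def)
  have hle: "h \<le> cheeger_ratio M P N E" if "cluster_in M P N \<Omega> E" for E
    unfolding hS using Sbdd that by (intro cInf_lower) (auto simp: S_def)
  have "\<exists>E. cluster_in M P N \<Omega> E \<and> cheeger_ratio M P N E < h + 1 / real (Suc k)" for k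
  proof -
    have "Inf S < h + 1 / real (Suc k)" unfolding hS by simp
    then obtain x where "x \<in> S" "x < h + 1 / real (Suc k)" using cInf_less_iff[OF Sne Sbdd] by blast
    thus ?thesis unfolding S_def by blast
  qed
  then obtain Es where Es: "\<And>k. cluster_in M P N \<Omega> (Es k)"
    and Esr: "\<And>k. cheeger_ratio M P N (Es k) < h + 1 / real (Suc k)" by metis
  have Esconv: "(\<lambda>k. cheeger_ratio M P N (Es k)) \<longlonglongrightarrow> h"
  proof (rule tendsto_sandwich[OF _ _ tendsto_const])
    show "\<forall>\<^sub>F k in sequentially. h \<le> cheeger_ratio M P N (Es k)" using hle Es by simp
    show "\<forall>\<^sub>F k in sequentially. cheeger_ratio M P N (Es k) \<le> h + 1 / real (Suc k)"
      using Esr by (simp add: less_imp_le)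
    have "(\<lambda>k. h + 1 / real (Suc k)) \<longlonglongrightarrow> h + 0"
      by (intro tendsto_add tendsto_const LIMSEQ_inverse_real_of_nat[unfolded inverse_eq_divide])
    thus "(\<lambda>k. h + 1 / real (Suc k)) \<longlonglongrightarrow> h" by simp
  qed
  define C where "C = h + 1"
  have C0: "C \<ge> 0" using h0 unfolding C_def by simp
  have ch: "Es k i \<in> sets M \<and> 0 < emeasure M (Es k i) \<and> emeasure M (Es k i) < \<infinity> \<and> P (Es k i) < \<infinity>
         \<and> ae_subset M (Es k i) \<Omega>" if "i \<in> {1..N}" for k i
    using Es[of k] that unfolding cluster_in_def is_cluster_def by blast
  have term_le: "enn2real (P (Es k i)) / measure M (Es k i) \<le> C" if "i \<in> {1..N}" for k i
  proof -
    have "enn2real (P (Es k i)) / measure M (Es k i) \<le> cheeger_ratio M P N (Es k)"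
      unfolding cheeger_ratio_def using that
      by (rule member_le_sum[where f="\<lambda>i. enn2real (P (Es k i)) / measure M (Es k i)"]) simp_all
    also have "\<dots> \<le> C"
    proof -
      have "1 / real (Suc k) \<le> 1" by simp
      thus ?thesis using Esr[of k] unfolding C_def by linarith
    qed
    finally show ?thesis .
  qed
  obtain e where e: "e > 0" and eb: "\<And>E. E \<in> sets M \<Longrightarrow> 0 < emeasure M E \<Longrightarrow> emeasure M E < \<infinity> \<Longrightarrow> P E < \<infinity> \<Longrightarrow>
           enn2real (P E) / measure M E \<le> C \<Longrightarrow> e < measure M E"
    using small_bound[OF small C0] by blast
  have big: "e < measure M (Es k i)" if "i \<in> {1..N}" for k i
    using eb[OF _ _ _ _ term_le[OF that]] ch[OF that] by blast
  define c where "c = C * measure M \<Omega>"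
  have c0: "c \<ge> 0" unfolding c_def using C0 by simp
  have Pbound: "P (Es k i) \<le> ennreal c" if "i \<in> {1..N}" for k i
  proof -
    have em: "emeasure M (Es k i) = ennreal (measure M (Es k i))" using ch[OF that, of k] by (intro emeasure_eq_ennreal_measure) (simp add: less_top)
    have mpos: "measure M (Es k i) > 0" using ch[OF that, of k] em by simp
    have "emeasure M (Es k i) \<le> emeasure M \<Omega>" using ch[OF that, of k] \<Omega>s by (intro ae_emeasure_le) auto
    hence mle: "measure M (Es k i) \<le> measure M \<Omega>" using \<Omega>fin by (simp add: measure_def enn2real_mono)
    have "enn2real (P (Es k i)) \<le> C * measure M (Es k i)" using term_le[OF that] mpos by (simp add: divide_le_eq)
    also have "\<dots> \<le> c" unfolding c_def using mle C0 by (simp add: mult_left_mono)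
    finally have "enn2real (P (Es k i)) \<le> c" .
    moreover have "P (Es k i) = ennreal (enn2real (P (Es k i)))" using ch[OF that, of k] by (simp add: less_top)
    ultimately show ?thesis by (metis ennreal_leI)
  qed
  define F where "F k i = Es k (if i \<in> {1..N} then i else 1)" for k i
  have FEs: "i \<in> {1..N} \<Longrightarrow> F k i = Es k i" for k i unfolding F_def by simp
  have F1: "F k 1 = Es k 1" for k unfolding F_def by simp
  have N1': "1 \<in> {1..N}" using N1 by simp
  have idx: "(if i \<in> {1..N} then i else 1) \<in> {1..N}" for i using N1' by simp
  have Fs: "F k i \<in> sets M" for k i
    unfolding F_def using ch[OF idx[of i], of k] by blast
  have Fp: "P (F k i) \<le> ennreal c" for k i
    unfolding F_def using Pbound[OF idx[of i], of k] by blast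
  obtain r E p where r: "strict_mono r" and H: "\<forall>i\<in>{1..N}. E i \<in> sets M \<and> P (E i) \<le> ennreal c \<and>
           L1_conv_sets M (\<lambda>k. F (r k) i) (E i) \<and> (\<lambda>k. enn2real (P (F (r k) i))) \<longlonglongrightarrow> p i"
    using extract_subseq[of M P c F N, OF comp c0 Fs Fp] by (elim exE conjE) blast
  define G where "G k i = Es (r k) i" for k i
  have HG: "E i \<in> sets M \<and> P (E i) \<le> ennreal c \<and>
           L1_conv_sets M (\<lambda>k. G k i) (E i) \<and> (\<lambda>k. enn2real (P (G k i))) \<longlonglongrightarrow> p i" if "i \<in> {1..N}" for i
  proof -
    have "E i \<in> sets M \<and> P (E i) \<le> ennreal c \<and>
           L1_conv_sets M (\<lambda>k. F (r k) i) (E i) \<and> (\<lambda>k. enn2real (P (F (r k) i))) \<longlonglongrightarrow> p i"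
      using H that by blast
    moreover have "\<And>k. F (r k) i = G k i" using FEs[OF that] unfolding G_def by simp
    ultimately show ?thesis by simp
  qed
  have Gs: "G k i \<in> sets M" if "i \<in> {1..N}" for k i using ch[OF that, of "r k"] unfolding G_def by blast
  have d1: "(\<lambda>k. emeasure M (E i - G k i)) \<longlonglongrightarrow> 0" if "i \<in> {1..N}" for i
    using L1_sym(2)[of M "\<lambda>k. G k i" "E i"] HG[OF that] by simp
  have aeE: "ae_subset M (E i) \<Omega>" if i: "i \<in> {1..N}" for i
    unfolding ae_subset_def
  proof (rule zero_by_limit[OF _ d1[OF i]])
    fix k
    have "emeasure M (E i - \<Omega>) \<le> emeasure M ((G k i - \<Omega>) \<union> (E i - G k i))"
      using HG[OF i] Gs[OF i] \<Omega>s by (intro emeasure_mono) auto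
    also have "\<dots> \<le> emeasure M (G k i - \<Omega>) + emeasure M (E i - G k i)"
      using HG[OF i] Gs[OF i] \<Omega>s by (intro emeasure_subadditive) auto
    also have "emeasure M (G k i - \<Omega>) = 0" using ch[OF i, of "r k"] unfolding G_def ae_subset_def by simp
    finally show "emeasure M (E i - \<Omega>) \<le> emeasure M (E i - G k i)" by simp
  qed
  have Efin: "emeasure M (E i) < \<infinity>" if i: "i \<in> {1..N}" for i
    using ae_emeasure_le[OF aeE[OF i]] HG[OF i] \<Omega>s \<Omega>fin by (meson le_less_trans)
  have mconv: "(\<lambda>k. measure M (G k i)) \<longlonglongrightarrow> measure M (E i)" if i: "i \<in> {1..N}" for i
    using measure_conv[of M "\<lambda>k. G k i" "E i"] HG[OF i] Efin[OF i] ch[OF i] unfolding G_def by simp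
  have Ebig: "e \<le> measure M (E i)" if i: "i \<in> {1..N}" for i
    using big[OF i] unfolding G_def by (intro LIMSEQ_le_const[OF mconv[OF i]]) (auto simp: G_def less_imp_le)
  have Epos: "0 < emeasure M (E i)" if i: "i \<in> {1..N}" for i
    using Ebig[OF i] e Efin[OF i] by (simp add: emeasure_eq_ennreal_measure)
  have disj: "emeasure M (E i \<inter> E j) = 0" if i: "i \<in> {1..N}" and j: "j \<in> {1..N}" and ij: "i \<noteq> j" for i j
  proof (rule zero_by_limit)
    show "(\<lambda>k. emeasure M (E i - G k i) + emeasure M (E j - G k j)) \<longlonglongrightarrow> 0"
      using tendsto_add[OF d1[OF i] d1[OF j]] by simp
    fix k
    have "emeasure M (E i \<inter> E j) \<le> emeasure M ((G k i \<inter> G k j) \<union> ((E i - G k i) \<union> (E j - G k j)))"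
      using HG[OF i] HG[OF j] Gs[OF i] Gs[OF j] by (intro emeasure_mono) auto
    also have "\<dots> \<le> emeasure M (G k i \<inter> G k j) + emeasure M ((E i - G k i) \<union> (E j - G k j))"
      using HG[OF i] HG[OF j] Gs[OF i] Gs[OF j] by (intro emeasure_subadditive) auto
    also have "\<dots> \<le> emeasure M (G k i \<inter> G k j) + (emeasure M (E i - G k i) + emeasure M (E j - G k j))"
      using HG[OF i] HG[OF j] Gs[OF i] Gs[OF j] by (intro add_left_mono emeasure_subadditive) auto
    also have "emeasure M (G k i \<inter> G k j) = 0"
      using Es[of "r k"] i j ij unfolding G_def cluster_in_def is_cluster_def by blast
    finally show "emeasure M (E i \<inter> E j) \<le> emeasure M (E i - G k i) + emeasure M (E j - G k j)" by simp
  qed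
  have Pfin: "P (E i) < \<infinity>" if i: "i \<in> {1..N}" for i
    using HG[OF i] by (metis ennreal_less_top infinity_ennreal_def le_less_trans)
  have cl: "cluster_in M P N \<Omega> E"
    unfolding cluster_in_def is_cluster_def using HG Epos Efin Pfin disj aeE by blast
  have p0: "p i \<ge> 0" if i: "i \<in> {1..N}" for i
    using HG[OF i] by (intro LIMSEQ_le_const[of "\<lambda>k. enn2real (P (G k i))"]) auto
  have Ple: "enn2real (P (E i)) \<le> p i" if i: "i \<in> {1..N}" for i
  proof -
    have L: "L1_conv_sets M (\<lambda>k. G k i) (E i)" using HG[OF i] by blast
    have "P (E i) \<le> liminf (\<lambda>k. P (G k i))" using lsc L unfolding perimeter_lsc_def by blast
    also have "liminf (\<lambda>k. P (G k i)) = ennreal (p i)"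
    proof (rule lim_imp_Liminf[OF trivial_limit_sequentially])
      have "(\<lambda>k. ennreal (enn2real (P (G k i)))) \<longlonglongrightarrow> ennreal (p i)"
        using HG[OF i] by (intro tendsto_ennrealI) auto
      moreover have "ennreal (enn2real (P (G k i))) = P (G k i)" for k
        using ch[OF i, of "r k"] unfolding G_def by (simp add: less_top)
      ultimately show "(\<lambda>k. P (G k i)) \<longlonglongrightarrow> ennreal (p i)" by simp
    qed
    finally show ?thesis using p0[OF i] by (intro enn2real_leI) auto
  qed
  have rconv: "(\<lambda>k. cheeger_ratio M P N (G k)) \<longlonglongrightarrow> h"
    using LIMSEQ_subseq_LIMSEQ[OF Esconv r] unfolding G_def by (simp add: o_def G_def[symmetric] fun_eq_iff)
  have rconv2: "(\<lambda>k. cheeger_ratio M P N (G k)) \<longlonglongrightarrow> (\<Sum>i=1..N. p i / measure M (E i))"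
    unfolding cheeger_ratio_def
  proof (intro tendsto_sum tendsto_divide)
    fix i assume i: "i \<in> {1..N}"
    show "(\<lambda>k. enn2real (P (G k i))) \<longlonglongrightarrow> p i" using HG[OF i] by blast
    show "(\<lambda>k. measure M (G k i)) \<longlonglongrightarrow> measure M (E i)" by (rule mconv[OF i])
    show "measure M (E i) \<noteq> 0" using Ebig[OF i] e by simp
  qed
  have hp: "h = (\<Sum>i=1..N. p i / measure M (E i))" using LIMSEQ_unique[OF rconv rconv2] .
  have "cheeger_ratio M P N E \<le> h"
    unfolding hp cheeger_ratio_def
    by (intro sum_mono divide_right_mono Ple) auto
  with hle[OF cl] have "cheeger_ratio M P N E = h" by simp
  with cl have "E \<in> cheeger_sets M P N \<Omega>" unfolding cheeger_sets_def h_def by simp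
  thus ?thesis by blast
qed

end
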